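(* Let $H_1,H_2\in\mathcal O$, let $\lambda_1,\dots,\lambda_N$ be the eigenvalues of $H_2$ with corresponding orthonormal eigenvectors $\psi_1,\dots,\psi_N$, and assume: (i) $(H_1\psi_k,\psi_j)\neq0$ for all $k\neq j$; (ii) $\lambda_k-\lambda_l\neq\lambda_{k'}-\lambda_{l'}$ for all ordered pairs $(k,l)\neq(k',l')$ in $\{1,\dots,N\}^2$. Then: if $\mathrm{Tr}(H_1)=\mathrm{Tr}(H_2)=0$, $\mathcal L(H_1,H_2)$ equals the space of all traceless Hermitian operators on $\mathcal H$; otherwise $\mathcal L(H_1,H_2)=\mathcal O$.
   Context: $\mathcal H=\mathbb C^N$, $N>1$, with inner product $(\psi,\psi')=\sum_k\psi_k\bar\psi'_k$. $\mathcal O$ is the real vector space of Hermitian operators on $\mathcal H$, with bracket $\{A,B\}=i(AB-BA)\in\mathcal O$. $\mathcal L(H_1,H_2)$ is the real linear span of $H_1$, $H_2$ and all iterated brackets of them: $\{H_1,H_2\},\{H_1,\{H_1,H_2\}\},\{H_2,\{H_1,H_2\}\},\dots$ (i.e. the smallest real subspace containing $H_1,H_2$ and closed under $\{\cdot,\cdot\}$). *)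

theory Defs
  imports "HOL-Analysis.Analysis"
begin

text \<open>Operators on H = C^N are N x N complex matrices, with N = CARD('n).\<close>

definition hermitian :: "complex^'n^'n \<Rightarrow> bool" where
  "hermitian A \<longleftrightarrow> (\<forall>i j. A $ i $ j = cnj (A $ j $ i))"

definition cinner :: "complex^'n \<Rightarrow> complex^'n \<Rightarrow> complex" where
  "cinner x y = (\<Sum>k\<in>UNIV. x $ k * cnj (y $ k))"

definition lie_br :: "complex^'n^'n \<Rightarrow> complex^'n^'n \<Rightarrow> complex^'n^'n" where
  "lie_br A B = (\<chi> i j. \<i> * ((A ** B) $ i $ j - (B ** A) $ i $ j))"

definition rscale :: "real \<Rightarrow> complex^'n^'n \<Rightarrow> complex^'n^'n" where
  "rscale r A = (\<chi> i j. complex_of_real r * A $ i $ j)"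

inductive_set lie_gen :: "complex^'n^'n \<Rightarrow> complex^'n^'n \<Rightarrow> (complex^'n^'n) set"
  for H1 H2 where
  gen1: "H1 \<in> lie_gen H1 H2"
| gen2: "H2 \<in> lie_gen H1 H2"
| zero: "0 \<in> lie_gen H1 H2"
| add: "A \<in> lie_gen H1 H2 \<Longrightarrow> B \<in> lie_gen H1 H2 \<Longrightarrow> A + B \<in> lie_gen H1 H2"
| scale: "A \<in> lie_gen H1 H2 \<Longrightarrow> rscale r A \<in> lie_gen H1 H2"
| br: "A \<in> lie_gen H1 H2 \<Longrightarrow> B \<in> lie_gen H1 H2 \<Longrightarrow> lie_br A B \<in> lie_gen H1 H2"

end

theory Submission
  imports Defs
begin


definition cs :: "complex \<Rightarrow> complex^'n^'n \<Rightarrow> complex^'n^'n" where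
  "cs c A = (\<chi> i j. c * A $ i $ j)"

definition outer :: "complex^'n \<Rightarrow> complex^'n \<Rightarrow> complex^'n^'n" where
  "outer x y = (\<chi> i j. x $ i * cnj (y $ j))"

lemma cs_entry[simp]: "cs c A $ i $ j = c * A $ i $ j" by (simp add: cs_def)
lemma outer_entry[simp]: "outer x y $ i $ j = x $ i * cnj (y $ j)" by (simp add: outer_def)

lemma rscale_eq: "rscale r A = r *\<^sub>R A"
  by (simp add: rscale_def vec_eq_iff) (simp add: scaleR_conv_of_real)

lemma cs_real: "cs (complex_of_real r) A = r *\<^sub>R A"
  by (simp add: vec_eq_iff) (simp add: scaleR_conv_of_real)

lemma scaleR_entry: "((r::real) *\<^sub>R (A::complex^'n^'m)) $ i $ j = complex_of_real r * A $ i $ j"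
  unfolding vector_scaleR_component by (simp add: scaleR_conv_of_real)

lemma cs_zero[simp]: "cs 0 A = 0" by (simp add: vec_eq_iff)
lemma cs_zero2[simp]: "cs c 0 = 0" by (simp add: vec_eq_iff)
lemma cs_add: "cs (a + b) A = cs a A + cs b A" by (simp add: vec_eq_iff algebra_simps)
lemma cs_add2: "cs a (A + B) = cs a A + cs a B" by (simp add: vec_eq_iff algebra_simps)
lemma cs_diff2: "cs a (A - B) = cs a A - cs a B" by (simp add: vec_eq_iff algebra_simps)
lemma cs_cs: "cs a (cs b A) = cs (a * b) A" by (simp add: vec_eq_iff algebra_simps)
lemma cs_scaleR: "r *\<^sub>R cs a A = cs (of_real r * a) A" by (simp add: vec_eq_iff) (simp add: scaleR_conv_of_real)
lemma cs_one[simp]: "cs 1 A = A" by (simp add: vec_eq_iff)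
lemma cs_sum: "cs a (sum f S) = sum (\<lambda>x. cs a (f x)) S"
  by (induction S rule: infinite_finite_induct) (auto simp: cs_add2)
lemma cs_sum1: "cs (sum f S) A = sum (\<lambda>x. cs (f x) A) S"
  by (induction S rule: infinite_finite_induct) (auto simp: cs_add)

lemma mult_cs: "A ** cs c B = cs c (A ** B)"
  by (simp add: vec_eq_iff matrix_matrix_mult_def sum_distrib_left algebra_simps)
lemma cs_mult: "cs c A ** B = cs c (A ** B)"
  by (simp add: vec_eq_iff matrix_matrix_mult_def sum_distrib_left algebra_simps)
lemma mult_sum: "A ** sum f S = sum (\<lambda>x. A ** f x) S"
  by (induction S rule: infinite_finite_induct) (auto simp: matrix_add_ldistrib)
lemma add_mult: "((B::complex^'n^'n) + C) ** A = B ** A + C ** A"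
  by (simp add: vec_eq_iff matrix_matrix_mult_def sum.distrib algebra_simps)
lemma sum_mult: "sum (f::_\<Rightarrow>complex^'n^'n) S ** (A::complex^'n^'n) = sum (\<lambda>x. f x ** A) S"
  by (induction S rule: infinite_finite_induct) (auto simp: add_mult)
lemma mult_diff: "(A::complex^'n^'n) ** (B - C) = A ** B - A ** C"
  by (simp add: vec_eq_iff matrix_matrix_mult_def sum_subtractf algebra_simps)
lemma diff_mult: "((B::complex^'n^'n) - C) ** A = B ** A - C ** A"
  by (simp add: vec_eq_iff matrix_matrix_mult_def sum_subtractf algebra_simps)

lemma lie_br_eq: "lie_br A B = cs \<i> (A ** B - B ** A)"
  by (simp add: lie_br_def vec_eq_iff algebra_simps)

lemma trace_cs: "trace (cs c A) = c * trace A"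
  by (simp add: trace_def sum_distrib_left)
lemma trace_sum: "trace (sum f S) = (\<Sum>x\<in>S. trace (f x))"
  by (induction S rule: infinite_finite_induct) (auto simp: trace_def sum.distrib)

context fixes H1 H2 :: "complex^'n^'n" begin
lemma lg_sum: "(\<And>x. x \<in> S \<Longrightarrow> f x \<in> lie_gen H1 H2) \<Longrightarrow> sum f S \<in> lie_gen H1 H2"
  by (induction S rule: infinite_finite_induct) (auto intro: lie_gen.intros)
lemma lg_scaleR: "A \<in> lie_gen H1 H2 \<Longrightarrow> r *\<^sub>R A \<in> lie_gen H1 H2"
  using lie_gen.scale rscale_eq by metis
lemma lg_diff: "A \<in> lie_gen H1 H2 \<Longrightarrow> B \<in> lie_gen H1 H2 \<Longrightarrow> A - B \<in> lie_gen H1 H2"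
proof -
  assume a: "A \<in> lie_gen H1 H2" "B \<in> lie_gen H1 H2"
  have "A + (-1) *\<^sub>R B \<in> lie_gen H1 H2" using a lie_gen.add lg_scaleR by blast
  then show ?thesis by simp
qed
end



definition coef :: "(_ \<Rightarrow> complex^'n) \<Rightarrow> complex^'n^'n \<Rightarrow> 'n \<Rightarrow> 'n \<Rightarrow> complex" where
  "coef psi X k l = cinner (X *v psi l) (psi k)"

definition Sm :: "('n \<Rightarrow> complex^'n) \<Rightarrow> ('n \<Rightarrow> 'n \<Rightarrow> complex) \<Rightarrow> complex^'n^'n" where
  "Sm psi c = (\<Sum>a\<in>UNIV. \<Sum>b\<in>UNIV. cs (c a b) (outer (psi a) (psi b)))"

locale lsetup =
  fixes H1 H2 :: "complex^'n^'n"
    and lam :: "'n \<Rightarrow> real"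
    and psi :: "'n \<Rightarrow> complex^'n"
  assumes herm1: "hermitian H1" and herm2: "hermitian H2"
    and eig: "\<And>k. H2 *v psi k = lam k *\<^sub>R psi k"
    and orthonormal: "\<And>k j. cinner (psi k) (psi j) = (if k = j then 1 else 0)"
    and cond_i: "\<And>k j. k \<noteq> j \<Longrightarrow> cinner (H1 *v psi k) (psi j) \<noteq> 0"
    and cond_ii: "\<And>k l k' l'. k \<noteq> l \<Longrightarrow> k' \<noteq> l' \<Longrightarrow> (k, l) \<noteq> (k', l') \<Longrightarrow>
                    lam k - lam l \<noteq> lam k' - lam l'"
begin

abbreviation E where "E k l \<equiv> outer (psi k) (psi l)"

lemma EE: "E k l ** E m n = (if l = m then E k n else 0)"
proof -
  have "(E k l ** E m n) $ i $ j = psi k $ i * cnj (psi n $ j) * cinner (psi m) (psi l)" for i j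
    by (simp add: matrix_matrix_mult_def cinner_def sum_distrib_left mult_ac)
  then show ?thesis using orthonormal[of m l] by (auto simp: vec_eq_iff)
qed

definition U :: "complex^'n^'n" where "U = (\<chi> i k. psi k $ i)"
definition Uh :: "complex^'n^'n" where "Uh = (\<chi> k i. cnj (psi k $ i))"

lemma UhU: "Uh ** U = mat 1"
proof -
  have "(Uh ** U) $ k $ l = cinner (psi l) (psi k)" for k l
    by (simp add: U_def Uh_def matrix_matrix_mult_def cinner_def mult_ac)
  then show ?thesis using orthonormal by (auto simp: vec_eq_iff mat_def)
qed

lemma UUh: "U ** Uh = mat 1"
  using UhU matrix_left_right_inverse by blast

lemma compl: "(\<Sum>k\<in>UNIV. psi k $ i * cnj (psi k $ j)) = (if i = j then 1 else 0)"
proof -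
  have "(U ** Uh) $ i $ j = (\<Sum>k\<in>UNIV. psi k $ i * cnj (psi k $ j))"
    by (simp add: U_def Uh_def matrix_matrix_mult_def)
  then show ?thesis using UUh by (simp add: mat_def)
qed

lemma coefU: "(Uh ** X ** U) $ k $ l = coef psi X k l"
  by (simp add: U_def Uh_def matrix_matrix_mult_def coef_def cinner_def matrix_vector_mult_def
      sum_distrib_left sum_distrib_right mult_ac) (rule sum.swap)

lemma expand: "X = Sm psi (coef psi X)"
proof -
  let ?C = "Uh ** X ** U"
  have "U ** ?C ** Uh = X"
    by (metis UUh matrix_mul_assoc matrix_mul_lid matrix_mul_rid)
  moreover have "(U ** ?C ** Uh) $ i $ j = Sm psi (coef psi X) $ i $ j" for i j
  proof -
    have "(U ** ?C ** Uh) $ i $ j = (\<Sum>b\<in>UNIV. \<Sum>a\<in>UNIV. psi a $ i * ?C $ a $ b * cnj (psi b $ j))"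
      by (simp add: matrix_matrix_mult_def U_def Uh_def sum_distrib_right)
    also have "\<dots> = (\<Sum>a\<in>UNIV. \<Sum>b\<in>UNIV. psi a $ i * ?C $ a $ b * cnj (psi b $ j))"
      by (rule sum.swap)
    also have "\<dots> = Sm psi (coef psi X) $ i $ j"
      unfolding Sm_def coefU by (simp add: sum_component mult_ac)
    finally show ?thesis .
  qed
  ultimately show ?thesis by (simp add: vec_eq_iff)
qed

lemma trace_coef: "trace X = (\<Sum>k\<in>UNIV. coef psi X k k)"
proof -
  let ?C = "Uh ** X ** U"
  have "U ** ?C ** Uh = X"
    by (metis UUh matrix_mul_assoc matrix_mul_lid matrix_mul_rid)
  then have "trace X = trace (?C ** Uh ** U)"
    by (metis trace_mul_sym matrix_mul_assoc)
  also have "\<dots> = trace ?C" by (simp add: UhU matrix_mul_assoc[symmetric])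
  finally show ?thesis by (simp add: trace_def coefU)
qed

lemma herm_coef: "hermitian Y \<Longrightarrow> coef psi Y l k = cnj (coef psi Y k l)"
proof -
  assume h: "hermitian Y"
  have "coef psi Y l k = (\<Sum>i\<in>UNIV. \<Sum>j\<in>UNIV. Y $ i $ j * psi k $ j * cnj (psi l $ i))"
    by (simp add: coef_def cinner_def matrix_vector_mult_def sum_distrib_right)
  also have "\<dots> = (\<Sum>j\<in>UNIV. \<Sum>i\<in>UNIV. Y $ i $ j * psi k $ j * cnj (psi l $ i))"
    by (rule sum.swap)
  also have "\<dots> = cnj (coef psi Y k l)"
  proof -
    have hh: "cnj (Y $ i $ j) = Y $ j $ i" for i j using h unfolding hermitian_def by (metis complex_cnj_cnj)
    show ?thesis
    by (simp add: coef_def cinner_def matrix_vector_mult_def sum_distrib_right sum_distrib_left hh mult_ac)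
  qed
  finally show ?thesis .
qed

lemma eigc: "(H2 *v psi k) $ i = complex_of_real (lam k) * psi k $ i"
proof -
  have "(H2 *v psi k) $ i = lam k *\<^sub>R (psi k $ i)" using eig[of k] by simp
  then show ?thesis by (simp add: scaleR_conv_of_real)
qed

lemma H2E: "H2 ** E k l = lam k *\<^sub>R E k l"
proof -
  have "(H2 ** E k l) $ i $ j = (H2 *v psi k) $ i * cnj (psi l $ j)" for i j
    by (simp add: matrix_matrix_mult_def matrix_vector_mult_def sum_distrib_right sum_distrib_left mult_ac)
  then show ?thesis by (simp add: vec_eq_iff eigc) (simp add: scaleR_conv_of_real)
qed

lemma EH2: "E k l ** H2 = lam l *\<^sub>R E k l"
proof -
  have "(E k l ** H2) $ i $ j = psi k $ i * cnj ((H2 *v psi l) $ j)" for i j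
  proof -
    have h: "H2 $ t $ j = cnj (H2 $ j $ t)" for t using herm2 unfolding hermitian_def by blast
    have "(E k l ** H2) $ i $ j = (\<Sum>t\<in>UNIV. psi k $ i * (cnj (psi l $ t) * H2 $ t $ j))"
      by (simp add: matrix_matrix_mult_def mult.assoc)
    also have "\<dots> = (\<Sum>t\<in>UNIV. psi k $ i * cnj (H2 $ j $ t * psi l $ t))"
      by (simp add: h mult.commute)
    also have "\<dots> = psi k $ i * cnj ((H2 *v psi l) $ j)"
      by (simp add: matrix_vector_mult_def sum_distrib_left)
    finally show ?thesis .
  qed
  then show ?thesis by (simp add: vec_eq_iff eigc) (simp add: scaleR_conv_of_real)
qed

end


context lsetup begin

abbreviation L where "L \<equiv> lie_gen H1 H2"

lemma Sm_add: "Sm psi c + Sm psi d = Sm psi (\<lambda>a b. c a b + d a b)"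
  by (simp add: Sm_def sum.distrib[symmetric] cs_add)

lemma Sm_diff: "Sm psi c - Sm psi d = Sm psi (\<lambda>a b. c a b - d a b)"
proof -
  have "Sm psi c = Sm psi d + Sm psi (\<lambda>a b. c a b - d a b)" by (simp add: Sm_add)
  then show ?thesis by simp
qed

lemma Sm_scaleR: "r *\<^sub>R Sm psi c = Sm psi (\<lambda>a b. complex_of_real r * c a b)"
  by (simp add: Sm_def scaleR_sum_right cs_scaleR)

lemma Sm_cs: "cs z (Sm psi c) = Sm psi (\<lambda>a b. z * c a b)"
  by (simp add: Sm_def cs_sum cs_cs)

lemma cs_scaleR2: "cs c (r *\<^sub>R A) = cs (c * complex_of_real r) A"
  by (simp add: vec_eq_iff) (simp add: scaleR_conv_of_real)

lemma H2_Sm: "H2 ** Sm psi c = Sm psi (\<lambda>a b. c a b * complex_of_real (lam a))"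
  by (simp add: Sm_def mult_sum mult_cs H2E cs_scaleR2)

lemma Sm_H2: "Sm psi c ** H2 = Sm psi (\<lambda>a b. c a b * complex_of_real (lam b))"
  by (simp add: Sm_def sum_mult cs_mult EH2 cs_scaleR2)

lemma ad_Sm: "lie_br H2 (Sm psi c) = Sm psi (\<lambda>a b. \<i> * complex_of_real (lam a - lam b) * c a b)"
  by (simp add: lie_br_eq H2_Sm Sm_H2 Sm_diff Sm_cs algebra_simps)

lemma Sm_delta: "Sm psi (\<lambda>a b. if a = k \<and> b = l then z else 0) = cs z (E k l)"
proof -
  have "Sm psi (\<lambda>a b. if a = k \<and> b = l then z else 0)
      = (\<Sum>a\<in>UNIV. if a = k then cs z (E a l) else 0)"
  proof -
    have cs_if: "cs (if P then z else 0) A = (if P then cs z A else 0)" for P A by simp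
    have "(\<Sum>b\<in>UNIV. cs (if a = k \<and> b = l then z else 0) (E a b)) = (if a = k then cs z (E a l) else 0)" for a
      by (cases "a = k") (simp_all add: cs_if)
    then show ?thesis unfolding Sm_def by simp
  qed
  also have "\<dots> = cs z (E k l)" by simp
  finally show ?thesis .
qed

definition F :: "'n \<Rightarrow> 'n \<Rightarrow> complex \<Rightarrow> complex^'n^'n" where
  "F k l z = cs z (E k l) + cs (cnj z) (E l k)"

lemma Sm_F: "k \<noteq> l \<Longrightarrow>
  Sm psi (\<lambda>a b. if a = k \<and> b = l then z else if a = l \<and> b = k then cnj z else 0) = F k l z"
proof -
  assume kl: "k \<noteq> l"
  have "(\<lambda>a b. if a = k \<and> b = l then z else if a = l \<and> b = k then cnj z else 0)
      = (\<lambda>a b. (if a = k \<and> b = l then z else 0) + (if a = l \<and> b = k then cnj z else 0))"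
    using kl by (auto simp: fun_eq_iff)
  then show ?thesis by (simp add: Sm_add[symmetric] Sm_delta F_def)
qed

lemma F_add: "F k l (z1 + z2) = F k l z1 + F k l z2"
  by (simp add: F_def cs_add)
lemma F_scaleR: "F k l (complex_of_real r * z) = r *\<^sub>R F k l z"
  by (simp add: F_def cs_scaleR scaleR_add_right)

lemma ad_in: "X \<in> L \<Longrightarrow> lie_br H2 X \<in> L"
  by (simp add: lie_gen.br lie_gen.gen2)

lemma prod_in:
  assumes "finite V" "Sm psi c \<in> L"
  shows "Sm psi (\<lambda>a b. complex_of_real (\<Prod>\<nu>\<in>V. \<nu> - (lam a - lam b)^2) * c a b) \<in> L"
  using assms(1)
proof (induction V rule: finite_induct)
  case empty then show ?case using assms(2) by simp
next
  case (insert \<nu> V)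
  let ?X = "Sm psi (\<lambda>a b. complex_of_real (\<Prod>\<nu>\<in>V. \<nu> - (lam a - lam b)^2) * c a b)"
  have "lie_br H2 (lie_br H2 ?X) + \<nu> *\<^sub>R ?X \<in> L"
    using insert.IH by (intro lie_gen.add ad_in lg_scaleR)
  moreover have "lie_br H2 (lie_br H2 ?X) + \<nu> *\<^sub>R ?X =
     Sm psi (\<lambda>a b. complex_of_real (\<Prod>\<nu>\<in>insert \<nu> V. \<nu> - (lam a - lam b)^2) * c a b)"
    using insert.hyps by (simp add: ad_Sm Sm_scaleR Sm_add power2_eq_square algebra_simps)
  ultimately show ?case by simp
qed

end


context lsetup begin

lemma F_in:
  assumes kl: "k \<noteq> l"
  shows "F k l z \<in> L"
proof -
  define w where "w = coef psi H1 k l"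
  have w0: "w \<noteq> 0" using cond_i[of l k] kl by (simp add: w_def coef_def)
  have cw: "coef psi H1 l k = cnj w" unfolding w_def by (rule herm_coef[OF herm1])
  define \<nu>0 where "\<nu>0 = (lam k - lam l)^2"
  define V where "V = (\<lambda>p. (lam (fst p) - lam (snd p))^2) ` {p. fst p \<noteq> snd p} - {\<nu>0}"
  have finV: "finite V" unfolding V_def by simp
  define P where "P a b = (\<Prod>\<nu>\<in>V. \<nu> - (lam a - lam b)^2)" for a b
  have lkl: "lam k \<noteq> lam l" using cond_ii[of k l l k] kl by auto
  have nu0: "\<nu>0 \<noteq> 0" using lkl by (simp add: \<nu>0_def)
  have key: "P a b = 0" if "a \<noteq> b" "(a, b) \<noteq> (k, l)" "(a, b) \<noteq> (l, k)" for a b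
  proof -
    have "(lam a - lam b)^2 \<noteq> \<nu>0"
    proof
      assume "(lam a - lam b)^2 = \<nu>0"
      then have "lam a - lam b = lam k - lam l \<or> lam a - lam b = lam l - lam k"
        unfolding \<nu>0_def by (metis minus_diff_eq power2_eq_iff)
      then show False using cond_ii[of a b k l] cond_ii[of a b l k] that kl by auto
    qed
    then have "(lam a - lam b)^2 \<in> V" unfolding V_def using that(1) by (auto intro!: image_eqI[where x="(a,b)"])
    then show ?thesis unfolding P_def using finV by (auto simp: prod_zero_iff)
  qed
  have Pkl: "P k l \<noteq> 0" unfolding P_def using finV by (auto simp: prod_zero_iff V_def \<nu>0_def)
  have Plk: "P l k = P k l" unfolding P_def by (simp add: power2_commute)
  define R where "R = - \<nu>0 * P k l"
  have R0: "R \<noteq> 0" using nu0 Pkl by (simp add: R_def)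
  define X1 where "X1 = Sm psi (\<lambda>a b. complex_of_real (P a b) * coef psi H1 a b)"
  have X1L: "X1 \<in> L" unfolding X1_def P_def
    using prod_in[OF finV, of "coef psi H1"] expand[of H1] lie_gen.gen1 by metis
  define z2 where "z2 = complex_of_real R * w"
  define G where "G z a b = (if a = k \<and> b = l then z else if a = l \<and> b = k then cnj z else 0)" for z a b
  have c2: "(\<lambda>a b. \<i> * complex_of_real (lam a - lam b) * (\<i> * complex_of_real (lam a - lam b) *
              (complex_of_real (P a b) * coef psi H1 a b))) = G z2"
  proof (intro ext)
    fix a b
    show "\<i> * complex_of_real (lam a - lam b) * (\<i> * complex_of_real (lam a - lam b) *
              (complex_of_real (P a b) * coef psi H1 a b)) = G z2 a b"
    proof (cases "a = k \<and> b = l")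
      case True then show ?thesis
        by (simp add: G_def z2_def R_def \<nu>0_def w_def power2_eq_square algebra_simps)
    next
      case F1: False
      show ?thesis
      proof (cases "a = l \<and> b = k")
        case True then show ?thesis using kl
          by (simp add: G_def z2_def R_def \<nu>0_def cw Plk power2_eq_square algebra_simps)
      next
        case F2: False
        show ?thesis
        proof (cases "a = b")
          case True then show ?thesis using F1 F2 kl by (auto simp: G_def)
        next
          case False then show ?thesis using F1 F2 key[of a b] by (auto simp: G_def)
        qed
      qed
    qed
  qed
  have X2: "lie_br H2 (lie_br H2 X1) = F k l z2"
    unfolding X1_def ad_Sm
    by (simp only: c2, unfold G_def, rule Sm_F[OF kl])
  define \<mu> where "\<mu> = lam k - lam l"
  define z3 where "z3 = \<i> * complex_of_real \<mu> * z2"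
  have c3: "(\<lambda>a b. \<i> * complex_of_real (lam a - lam b) * G z2 a b) = G z3"
  proof (intro ext)
    fix a b
    show "\<i> * complex_of_real (lam a - lam b) * G z2 a b = G z3 a b"
      using kl by (auto simp: G_def z3_def \<mu>_def algebra_simps)
  qed
  have X3: "lie_br H2 (lie_br H2 (lie_br H2 X1)) = F k l z3"
  proof -
    have "lie_br H2 (lie_br H2 (lie_br H2 X1)) = lie_br H2 (Sm psi (G z2))"
      unfolding X1_def ad_Sm c2 ..
    also have "\<dots> = Sm psi (G z3)" unfolding ad_Sm c3 ..
    also have "\<dots> = F k l z3" unfolding G_def by (rule Sm_F[OF kl])
    finally show ?thesis .
  qed
  have F2L: "F k l z2 \<in> L" using X2 X1L ad_in by metis
  have F3L: "F k l z3 \<in> L" using X3 X1L ad_in by metis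
  have z20: "z2 \<noteq> 0" using R0 w0 by (simp add: z2_def)
  have mu0: "\<mu> \<noteq> 0" using lkl by (simp add: \<mu>_def)
  define t where "t = z / z2"
  have zdec: "z = complex_of_real (Re t) * z2 + complex_of_real (Im t / \<mu>) * z3"
  proof -
    have "complex_of_real (Re t) * z2 + complex_of_real (Im t / \<mu>) * z3
        = (complex_of_real (Re t) + \<i> * complex_of_real (Im t)) * z2"
      using mu0 by (simp add: z3_def algebra_simps)
    also have "\<dots> = t * z2" by (simp add: complex_eq[of t, symmetric])
    also have "\<dots> = z" using z20 by (simp add: t_def)
    finally show ?thesis by simp
  qed
  show ?thesis
    apply (subst zdec)
    unfolding F_add F_scaleR
    by (intro lie_gen.add lg_scaleR F2L F3L)
qed

end


context lsetup begin

lemma br_F: "k \<noteq> l \<Longrightarrow> lie_br (F k l 1) (F k l \<i>) = 2 *\<^sub>R (E k k - E l l)"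
  apply (simp add: lie_br_eq F_def add_mult matrix_add_ldistrib cs_mult mult_cs EE)
  apply (simp add: vec_eq_iff)
  apply (simp add: scaleR_conv_of_real algebra_simps)
  done

lemma diag_in: "E k k - E l l \<in> L"
proof (cases "k = l")
  case True then show ?thesis by (simp add: lie_gen.zero)
next
  case False
  have "lie_br (F k l 1) (F k l \<i>) \<in> L" by (intro lie_gen.br F_in False)
  then have "(1/2) *\<^sub>R (2 *\<^sub>R (E k k - E l l)) \<in> L" using br_F[OF False] lg_scaleR by metis
  then show ?thesis by simp
qed

lemma traceless_in:
  assumes h: "hermitian Y" and t: "trace Y = 0"
  shows "Y \<in> L"
proof -
  define c where "c = coef psi Y"
  have hc: "c b a = cnj (c a b)" for a b unfolding c_def by (rule herm_coef[OF h])
  have hc': "cnj (c a b) = c b a" for a b by (metis hc complex_cnj_cnj)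
  define cd where "cd a b = (if a = b then c a b else 0)" for a b
  define co where "co a b = (if a = b then 0 else c a b)" for a b
  have Y: "Y = Sm psi cd + Sm psi co"
    unfolding Sm_add expand[of Y, folded c_def]
    by (rule arg_cong[where f="Sm psi"]) (auto simp: cd_def co_def fun_eq_iff)
  define G where "G a b = (if a = b then 0 else F a b (c a b))" for a b
  have GL: "(\<Sum>a\<in>UNIV. \<Sum>b\<in>UNIV. G a b) \<in> L"
    by (intro lg_sum) (auto simp: G_def lie_gen.zero F_in)
  have cs_if: "cs (if P then 0 else z) A = (if P then 0 else cs z A)" for P z A by simp
  have "(\<Sum>a\<in>UNIV. \<Sum>b\<in>UNIV. G a b) =
        Sm psi co + (\<Sum>a\<in>UNIV. \<Sum>b\<in>UNIV. cs (co b a) (E b a))"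
    unfolding Sm_def G_def F_def co_def
    by (simp add: sum.distrib[symmetric] cs_if hc')
       (auto intro!: sum.cong simp: hc')
  also have "(\<Sum>a\<in>UNIV. \<Sum>b\<in>UNIV. cs (co b a) (E b a)) = Sm psi co"
    unfolding Sm_def by (rule sum.swap)
  finally have "Sm psi co = (1/2) *\<^sub>R (\<Sum>a\<in>UNIV. \<Sum>b\<in>UNIV. G a b)"
    by (simp add: scaleR_2[symmetric])
  then have coL: "Sm psi co \<in> L" using GL lg_scaleR by metis
  define r where "r a = Re (c a a)" for a
  have cr: "c a a = complex_of_real (r a)" for a
    using hc[of a a] unfolding r_def by (metis Reals_cnj_iff complex_is_Real_iff of_real_Re)
  have sr: "(\<Sum>a\<in>UNIV. r a) = 0"
  proof -
    have "trace Y = (\<Sum>a\<in>UNIV. c a a)" unfolding c_def by (rule trace_coef)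
    then have "(\<Sum>a\<in>UNIV. complex_of_real (r a)) = 0" using t by (simp add: cr of_real_sum)
    then show ?thesis by (simp only: of_real_sum[symmetric] of_real_eq_0_iff)
  qed
  have "Sm psi cd = (\<Sum>a\<in>UNIV. r a *\<^sub>R E a a)"
  proof -
    have "(\<Sum>b\<in>UNIV. cs (cd a b) (E a b)) = r a *\<^sub>R E a a" for a
    proof -
      have "(\<Sum>b\<in>UNIV. cs (cd a b) (E a b)) = (\<Sum>b\<in>UNIV. if b = a then cs (c a a) (E a a) else 0)"
        by (rule sum.cong) (auto simp: cd_def)
      also have "\<dots> = r a *\<^sub>R E a a" by (simp add: cr cs_real)
      finally show ?thesis .
    qed
    then show ?thesis unfolding Sm_def by simp
  qed
  also have "\<dots> = (\<Sum>a\<in>UNIV. r a *\<^sub>R (E a a - E undefined undefined))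
                    + (\<Sum>a\<in>UNIV. r a) *\<^sub>R E undefined undefined"
    by (simp add: scaleR_diff_right sum_subtractf scaleR_sum_left)
  also have "\<dots> = (\<Sum>a\<in>UNIV. r a *\<^sub>R (E a a - E undefined undefined))"
    by (simp add: sr)
  finally have "Sm psi cd \<in> L"
    by (simp add: lg_sum lg_scaleR diag_in)
  then show ?thesis using coL Y lie_gen.add by metis
qed

end


lemma herm_cnj: "hermitian A \<Longrightarrow> cnj (A $ i $ j) = A $ j $ i"
  unfolding hermitian_def by (metis complex_cnj_cnj)
lemma herm_I: "(\<And>i j. cnj (A $ i $ j) = A $ j $ i) \<Longrightarrow> hermitian A"
  unfolding hermitian_def by (metis complex_cnj_cnj)
lemma herm_add: "hermitian A \<Longrightarrow> hermitian B \<Longrightarrow> hermitian (A + B)"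
  by (rule herm_I) (simp add: herm_cnj)
lemma herm_scaleR: "hermitian A \<Longrightarrow> hermitian (r *\<^sub>R A)"
  by (rule herm_I) (simp add: herm_cnj scaleR_entry)
lemma herm_zero: "hermitian 0" by (simp add: hermitian_def)
lemma herm_br: "hermitian A \<Longrightarrow> hermitian B \<Longrightarrow> hermitian (lie_br A B)"
proof -
  assume a: "hermitian A" and b: "hermitian B"
  have ha: "cnj (A $ i $ j) = A $ j $ i" for i j using a unfolding hermitian_def by (metis complex_cnj_cnj)
  have hb: "cnj (B $ i $ j) = B $ j $ i" for i j using b unfolding hermitian_def by (metis complex_cnj_cnj)
  show ?thesis by (rule herm_I) (simp add: lie_br_def matrix_matrix_mult_def ha hb algebra_simps)
qed

lemma herm_trace_real: "hermitian A \<Longrightarrow> trace A = complex_of_real (Re (trace A))"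
proof -
  assume a: "hermitian A"
  have "A $ i $ i \<in> \<real>" for i using a unfolding hermitian_def by (metis Reals_cnj_iff)
  then have "trace A \<in> \<real>" unfolding trace_def by (intro sum_in_Reals) auto
  then show ?thesis by (simp add: complex_is_Real_iff complex_eq_iff)
qed

lemma trace_scaleR: "trace (r *\<^sub>R (A::complex^'n^'n)) = complex_of_real r * trace A"
  using trace_cs[of "complex_of_real r" A] by (simp add: cs_real)

lemma lg_herm: "X \<in> lie_gen H1 H2 \<Longrightarrow> hermitian H1 \<Longrightarrow> hermitian H2 \<Longrightarrow> hermitian X"
  by (induction rule: lie_gen.induct) (auto simp: herm_add herm_scaleR herm_zero herm_br rscale_eq)

lemma lg_trace: "X \<in> lie_gen H1 H2 \<Longrightarrow> trace H1 = 0 \<Longrightarrow> trace H2 = 0 \<Longrightarrow> trace X = 0"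
proof (induction rule: lie_gen.induct)
  case zero then show ?case by (simp add: trace_def)
next
  case (add A B) then show ?case by (simp add: trace_add)
next
  case (scale A r) then show ?case by (simp add: rscale_eq trace_scaleR)
next
  case (br A B) then show ?case
    by (simp only: lie_br_eq trace_cs trace_sub trace_mul_sym[of A B]) simp
qed simp_all

theorem mainTheorem5:
  fixes H1 H2 :: "complex^'n^'n"
    and lam :: "'n \<Rightarrow> real"
    and psi :: "'n \<Rightarrow> complex^'n"
  assumes N: "CARD('n) > 1"
    and herm1: "hermitian H1" and herm2: "hermitian H2"
    and eig: "\<And>k. H2 *v psi k = lam k *\<^sub>R psi k"
    and orthonormal: "\<And>k j. cinner (psi k) (psi j) = (if k = j then 1 else 0)"
    and cond_i: "\<And>k j. k \<noteq> j \<Longrightarrow> cinner (H1 *v psi k) (psi j) \<noteq> 0"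
    and cond_ii: "\<And>k l k' l'. k \<noteq> l \<Longrightarrow> k' \<noteq> l' \<Longrightarrow> (k, l) \<noteq> (k', l') \<Longrightarrow>
                    lam k - lam l \<noteq> lam k' - lam l'"
  shows "(trace H1 = 0 \<and> trace H2 = 0 \<longrightarrow>
            lie_gen H1 H2 = {A. hermitian A \<and> trace A = 0})
       \<and> (\<not> (trace H1 = 0 \<and> trace H2 = 0) \<longrightarrow>
            lie_gen H1 H2 = {A. hermitian A})"
proof -
  interpret lsetup H1 H2 lam psi
    using herm1 herm2 eig orthonormal cond_i cond_ii by unfold_locales auto
  have sub: "lie_gen H1 H2 \<subseteq> {A. hermitian A}" using lg_herm herm1 herm2 by blast
  have tl: "{A. hermitian A \<and> trace A = 0} \<subseteq> lie_gen H1 H2" using traceless_in by blast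
  have all: "{A. hermitian A} \<subseteq> lie_gen H1 H2" if "H \<in> lie_gen H1 H2" "hermitian H" "trace H \<noteq> 0" for H :: "complex^'n^'n"
  proof
    fix Y :: "complex^'n^'n" assume "Y \<in> {A. hermitian A}"
    then have hY: "hermitian Y" by simp
    define t where "t = Re (trace H)"
    have tH: "trace H = complex_of_real t" unfolding t_def by (rule herm_trace_real[OF that(2)])
    have t0: "t \<noteq> 0" using that(3) tH by auto
    define s where "s = Re (trace Y) / t"
    have tY: "trace Y = complex_of_real (Re (trace Y))" by (rule herm_trace_real[OF hY])
    have "hermitian (Y - s *\<^sub>R H)"
      using herm_add[OF hY herm_scaleR[OF that(2), of "-s"]] by simp
    moreover have "trace (Y - s *\<^sub>R H) = 0"
      using t0 tY by (simp add: trace_sub trace_scaleR tH s_def)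
    ultimately have "Y - s *\<^sub>R H \<in> lie_gen H1 H2" using traceless_in by blast
    then have "(Y - s *\<^sub>R H) + s *\<^sub>R H \<in> lie_gen H1 H2"
      using lie_gen.add lg_scaleR that(1) by blast
    then show "Y \<in> lie_gen H1 H2" by simp
  qed
  show ?thesis
  proof (intro conjI impI)
    assume "trace H1 = 0 \<and> trace H2 = 0"
    then show "lie_gen H1 H2 = {A. hermitian A \<and> trace A = 0}"
      using sub tl lg_trace by blast
  next
    assume "\<not> (trace H1 = 0 \<and> trace H2 = 0)"
    then show "lie_gen H1 H2 = {A. hermitian A}"
      using sub all[OF lie_gen.gen1 herm1] all[OF lie_gen.gen2 herm2] by blast
  qed
qed


end
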